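(* Fix a policy $\pi$, a non-negative cost $c$, a model $W$, and a start state $x_0$; assume $J^\pi_h(x;c,W)<\infty$ for all $x,h$ and $\mathbb E[(\sum_{h<H}c(x_h,u_h))^2\mid\pi,x_0,W^\star]<\infty$. Consider trajectories $\{x_h,u_h\}$ generated by $\pi$ in the model $W^\star$ from $x_0$. Define the stopping time $\tau=\min\{h\ge0: J^\pi_h(x_h;c,W)\ge J^\pi_h(x_h;c,W^\star)\}$ (so $\tau\le H$, using $J^\pi_H\equiv0$) and $\widetilde J_h(x)=\min\{J^\pi_h(x;c,W),J^\pi_h(x;c,W^\star)\}$. Then $$J^\pi_0(x_0;c,W^\star)-J^\pi_0(x_0;c,W)\le\mathbb E\Big[\sum_{h=0}^{H-1}\mathbf 1\{h<\tau\}\Big(\mathbb E_{x'\sim P(\cdot\mid W^\star,x_h,u_h)}\widetilde J_{h+1}(x')-\mathbb E_{x'\sim P(\cdot\mid W,x_h,u_h)}\widetilde J_{h+1}(x')\Big)\Big],$$ where the outer expectation is over the trajectory of $\pi$ in $W^\star$.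
   Context: $\mathcal X=\mathbb R^{d_{\mathcal X}}$, $\mathcal U$ an arbitrary set, $\phi:\mathcal X\times\mathcal U\to\mathcal H$ a feature map into a Hilbert space; for a bounded linear $W:\mathcal H\to\mathbb R^{d_{\mathcal X}}$ the model $W$ has dynamics $x_{h+1}=W\phi(x_h,u_h)+\epsilon_h$, $\epsilon_h\sim\mathcal N(0,\sigma^2I)$ i.i.d., $h=0,\dots,H-1$, and $P(\cdot\mid W,x,u)=\mathcal N(W\phi(x,u),\sigma^2I)$. $W^\star$ is the true model. A policy is $\pi:\mathcal X\times\{0,\dots,H-1\}\to\mathcal U$ with $u_h=\pi(x_h,h)$. Cost-to-go: $J^\pi_h(x;c,W)=\mathbb E[\sum_{\ell=h}^{H-1}c(x_\ell,u_\ell)\mid\pi,x_h=x,W]$, with $J^\pi_H\equiv0$. *)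

theory Defs
  imports "HOL-Probability.Probability"
begin

definition gauss :: "real^'d \<Rightarrow> real \<Rightarrow> (real^'d) measure" where
  "gauss mu \<sigma> = density lborel (\<lambda>y. ennreal (\<Prod>i\<in>UNIV. normal_density (mu$i) \<sigma> (y$i)))"

definition trans :: "('h \<Rightarrow> real^'d) \<Rightarrow> (real^'d \<Rightarrow> 'u \<Rightarrow> 'h) \<Rightarrow> real
    \<Rightarrow> real^'d \<Rightarrow> 'u \<Rightarrow> (real^'d) measure" where
  "trans W \<phi> \<sigma> x u = gauss (W (\<phi> x u)) \<sigma>"

definition pathS :: "(nat \<Rightarrow> real^'d) measure" where
  "pathS = PiM UNIV (\<lambda>_. borel)"

text \<open>traj W phi sigma pi n h x: law of the trajectory of policy pi in model W started in
  state x at time h, run for n steps; coordinate l (h \<le> l \<le> h+n) is the state x_l.\<close>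
fun traj :: "('h \<Rightarrow> real^'d) \<Rightarrow> (real^'d \<Rightarrow> 'u \<Rightarrow> 'h) \<Rightarrow> real \<Rightarrow> (real^'d \<Rightarrow> nat \<Rightarrow> 'u)
    \<Rightarrow> nat \<Rightarrow> nat \<Rightarrow> real^'d \<Rightarrow> (nat \<Rightarrow> real^'d) measure" where
  "traj W \<phi> \<sigma> \<pi> 0 h x = return pathS (\<lambda>_. x)"
| "traj W \<phi> \<sigma> \<pi> (Suc n) h x =
     bind (trans W \<phi> \<sigma> x (\<pi> x h))
       (\<lambda>y. distr (traj W \<phi> \<sigma> \<pi> n (Suc h) y) pathS (\<lambda>\<omega>. fun_upd \<omega> h x))"

text \<open>Cost-to-go J^pi_h(x; c, W) = E[sum_{l=h}^{H-1} c(x_l,u_l) | pi, x_h = x, W] (in [0,\<infinity>]).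
  For h \<ge> H the sum is empty, so J_H = 0.\<close>
definition ctg :: "('h \<Rightarrow> real^'d) \<Rightarrow> (real^'d \<Rightarrow> 'u \<Rightarrow> 'h) \<Rightarrow> real \<Rightarrow> (real^'d \<Rightarrow> nat \<Rightarrow> 'u)
    \<Rightarrow> nat \<Rightarrow> (real^'d \<Rightarrow> 'u \<Rightarrow> real) \<Rightarrow> nat \<Rightarrow> real^'d \<Rightarrow> ennreal" where
  "ctg W \<phi> \<sigma> \<pi> H c h x =
     (\<integral>\<^sup>+ \<omega>. ennreal (\<Sum>l\<in>{h..<H}. c (\<omega> l) (\<pi> (\<omega> l) l)) \<partial>traj W \<phi> \<sigma> \<pi> (H - h) h x)"

end

theory Submission
  imports Defs
begin

lemma bl_meas: "bounded_linear f \<Longrightarrow> f \<in> borel_measurable borel"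
  by (intro borel_measurable_continuous_onI linear_continuous_on)

lemma vec_nth_meas[measurable]: "(\<lambda>x::real^'d. x $ i) \<in> borel_measurable borel"
  by (rule bl_meas) auto

lemma gauss_prod_eq:
  fixes mu y :: "real^'d"
  shows "(\<Prod>i\<in>UNIV. normal_density (mu$i) \<sigma> (y$i)) = (\<Prod>b\<in>Basis. normal_density (mu \<bullet> b) \<sigma> (y \<bullet> b))"
proof -
  have B: "(Basis :: (real^'d) set) = (\<lambda>i. axis i 1) ` UNIV"
    by (auto simp: Basis_vec_def)
  have inj: "inj_on (\<lambda>i::'d. axis i (1::real)) UNIV"
    by (auto simp: inj_on_def axis_eq_axis)
  show ?thesis unfolding B by (subst prod.reindex[OF inj]) (simp add: inner_axis)
qed

lemma gauss_prob: assumes "\<sigma> > 0" shows "prob_space (gauss mu \<sigma>)"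
proof
  have "emeasure (gauss mu \<sigma>) (space (gauss mu \<sigma>)) =
     (\<integral>\<^sup>+y. ennreal (\<Prod>i\<in>UNIV. normal_density (mu$i) \<sigma> (y$i)) \<partial>lborel)"
    unfolding gauss_def by (simp add: emeasure_density)
  also have "\<dots> = (\<integral>\<^sup>+y. (\<Prod>b\<in>Basis. ennreal (normal_density (mu \<bullet> b) \<sigma> (y \<bullet> b))) \<partial>lborel)"
    by (simp add: gauss_prod_eq prod_ennreal normal_density_nonneg)
  also have "\<dots> = (\<Prod>b\<in>(Basis::(real^'a) set). (\<integral>\<^sup>+x. ennreal (normal_density (mu \<bullet> b) \<sigma> x) \<partial>lborel))"
    by (rule nn_integral_lborel_prod) auto
  also have "\<dots> = 1"
  proof (rule prod.neutral, rule ballI)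
    fix b :: "real^'a"
    interpret prob_space "density lborel (normal_density (mu \<bullet> b) \<sigma>)"
      using assms by (rule prob_space_normal_density)
    have "emeasure (density lborel (normal_density (mu \<bullet> b) \<sigma>)) UNIV = 1"
      using emeasure_space_1 by simp
    then show "(\<integral>\<^sup>+x. ennreal (normal_density (mu \<bullet> b) \<sigma> x) \<partial>lborel) = 1"
      using assms by (simp add: emeasure_density)
  qed
  finally show "emeasure (gauss mu \<sigma>) (space (gauss mu \<sigma>)) = 1" .
qed

lemma gauss_kernel: assumes "\<sigma> > 0" shows "(\<lambda>mu. gauss mu \<sigma>) \<in> borel \<rightarrow>\<^sub>M prob_algebra (borel :: (real^'d) measure)"
proof (rule measurable_prob_algebraI)
  show "prob_space (gauss mu \<sigma>)" for mu by (rule gauss_prob[OF assms])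
  show "(\<lambda>mu. gauss mu \<sigma>) \<in> borel \<rightarrow>\<^sub>M subprob_algebra (borel :: (real^'d) measure)"
  proof (rule measurable_subprob_algebra)
    show "subprob_space (gauss mu \<sigma>)" for mu by (rule prob_space_imp_subprob_space, rule gauss_prob[OF assms])
    show "sets (gauss mu \<sigma>) = sets borel" for mu by (simp add: gauss_def)
    fix A :: "(real^'d) set" assume A: "A \<in> sets borel"
    have "(\<lambda>mu. emeasure (gauss mu \<sigma>) A) = (\<lambda>mu. \<integral>\<^sup>+y. ennreal (\<Prod>i\<in>UNIV. normal_density (mu$i) \<sigma> (y$i)) * indicator A y \<partial>lborel)"
      using A by (simp add: gauss_def emeasure_density)
    also have "\<dots> \<in> borel_measurable borel"
      using A by (intro lborel.borel_measurable_nn_integral) (simp add: normal_density_def)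
    finally show "(\<lambda>mu. emeasure (gauss mu \<sigma>) A) \<in> borel_measurable borel" .
  qed
qed

locale S =
  fixes \<phi> :: "real^'d \<Rightarrow> 'u \<Rightarrow> 'h::{real_inner,complete_space}"
    and \<sigma> :: real and \<pi> :: "real^'d \<Rightarrow> nat \<Rightarrow> 'u"
  assumes sig: "\<sigma> > 0"
    and pm: "\<forall>h. (\<lambda>x. \<phi> x (\<pi> x h)) \<in> borel_measurable borel"
begin

lemma trans_kernel:
  assumes "bounded_linear W"
  shows "(\<lambda>x. trans W \<phi> \<sigma> x (\<pi> x h)) \<in> borel \<rightarrow>\<^sub>M prob_algebra borel"
  unfolding trans_def
  by (rule measurable_compose[OF measurable_compose[OF pm[rule_format] bl_meas[OF assms]] gauss_kernel[OF sig]])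

lemma trans_prob: "prob_space (trans W \<phi> \<sigma> x u)"
  unfolding trans_def by (rule gauss_prob[OF sig])

lemma sets_trans[simp]: "sets (trans W \<phi> \<sigma> x u) = sets borel"
  by (simp add: trans_def gauss_def)

lemma space_trans[simp]: "space (trans W \<phi> \<sigma> x u) = UNIV"
  by (simp add: trans_def gauss_def)

lemma upd_meas:
  assumes "g \<in> M \<rightarrow>\<^sub>M borel"
  shows "(\<lambda>(p, w). w(h := g p)) \<in> (M \<Otimes>\<^sub>M pathS) \<rightarrow>\<^sub>M (pathS :: (nat \<Rightarrow> real^'d) measure)"
proof -
  have "(\<lambda>p. (snd p)(h := g (fst p))) \<in> (M \<Otimes>\<^sub>M pathS) \<rightarrow>\<^sub>M (pathS :: (nat \<Rightarrow> real^'d) measure)"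
    unfolding pathS_def
    apply (rule measurable_fun_upd[where J=UNIV])
      apply simp
     apply measurable
    using assms by measurable
  then show ?thesis by (simp add: case_prod_beta')
qed

lemma traj_kernel:
  assumes W: "bounded_linear W"
  shows "(\<lambda>x. traj W \<phi> \<sigma> \<pi> n h x) \<in> borel \<rightarrow>\<^sub>M prob_algebra pathS"
proof (induction n arbitrary: h)
  case 0
  have c: "(\<lambda>x::real^'d. \<lambda>_::nat. x) \<in> borel \<rightarrow>\<^sub>M pathS"
    unfolding pathS_def by (rule measurable_PiM_single') auto
  show ?case
    by (simp, rule measurable_compose[OF c measurable_return_prob_space])
next
  case (Suc n)
  have K: "(\<lambda>(x, y). distr (traj W \<phi> \<sigma> \<pi> n (Suc h) y) pathS (\<lambda>w. w(h := x)))
      \<in> (borel \<Otimes>\<^sub>M borel) \<rightarrow>\<^sub>M prob_algebra pathS"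
  proof -
    have "(\<lambda>p. distr (traj W \<phi> \<sigma> \<pi> n (Suc h) (snd p)) pathS (\<lambda>w. w(h := fst p)))
      \<in> (borel \<Otimes>\<^sub>M borel) \<rightarrow>\<^sub>M prob_algebra pathS"
      apply (rule measurable_distr_prob_space2)
       apply (rule measurable_compose[OF measurable_snd Suc.IH])
      apply (rule upd_meas)
      apply measurable
      done
    then show ?thesis by (simp add: case_prod_beta')
  qed
  show ?case
    apply simp
    apply (rule measurable_bind_prob_space2[OF trans_kernel[OF W]])
    using K by simp
qed

lemma traj_in: assumes "bounded_linear W"
  shows "traj W \<phi> \<sigma> \<pi> n h x \<in> space (prob_algebra pathS)"
  by (rule measurable_space[OF traj_kernel[OF assms]]) simp

lemma traj_prob: "bounded_linear W \<Longrightarrow> prob_space (traj W \<phi> \<sigma> \<pi> n h x)"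
  using traj_in by (simp add: space_prob_algebra)

lemma sets_traj[simp]: "bounded_linear W \<Longrightarrow> sets (traj W \<phi> \<sigma> \<pi> n h x) = sets pathS"
  using traj_in by (simp add: space_prob_algebra)

lemma traj_Suc_nn:
  assumes W: "bounded_linear W" and f: "f \<in> borel_measurable pathS"
  shows "(\<integral>\<^sup>+w. f w \<partial>traj W \<phi> \<sigma> \<pi> (Suc n) h x) =
     (\<integral>\<^sup>+y. (\<integral>\<^sup>+w. f (w(h := x)) \<partial>traj W \<phi> \<sigma> \<pi> n (Suc h) y) \<partial>trans W \<phi> \<sigma> x (\<pi> x h))"
proof -
  have N: "(\<lambda>y. distr (traj W \<phi> \<sigma> \<pi> n (Suc h) y) pathS (\<lambda>w. w(h := x)))
     \<in> trans W \<phi> \<sigma> x (\<pi> x h) \<rightarrow>\<^sub>M subprob_algebra pathS"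
  proof -
    have "(\<lambda>y. distr (traj W \<phi> \<sigma> \<pi> n (Suc h) y) pathS (\<lambda>w. w(h := x)))
     \<in> borel \<rightarrow>\<^sub>M prob_algebra pathS"
      apply (rule measurable_distr_prob_space2)
       apply (rule traj_kernel[OF W])
      by (rule upd_meas) simp
    then show ?thesis
      by (subst measurable_cong_sets[OF sets_trans refl]) (rule measurable_prob_algebraD)
  qed
  have T: "(\<lambda>w. w(h := x)) \<in> traj W \<phi> \<sigma> \<pi> n (Suc h) y \<rightarrow>\<^sub>M pathS" for y
  proof -
    have "(\<lambda>w::nat \<Rightarrow> real^'d. w(h := x)) \<in> pathS \<rightarrow>\<^sub>M pathS"
      unfolding pathS_def by (rule measurable_fun_upd[where J=UNIV]) auto
    then show ?thesis by (subst measurable_cong_sets[OF sets_traj[OF W] refl])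
  qed
  show ?thesis
    apply (simp only: traj.simps)
    apply (subst nn_integral_bind[OF f N])
    apply (subst nn_integral_distr[OF T])
     apply (simp add: f)
    apply (rule refl)
    done
qed

end


lemma prob_add:
  assumes "prob_space M" "g \<in> borel_measurable M"
  shows "(\<integral>\<^sup>+x. a + g x \<partial>M) = a + (\<integral>\<^sup>+x. g x \<partial>M)"
proof -
  interpret prob_space M by fact
  show ?thesis using assms(2) by (simp add: nn_integral_add emeasure_space_1)
qed

locale S1 = S \<phi> \<sigma> \<pi> for \<phi> :: "real^'d \<Rightarrow> 'u \<Rightarrow> 'h::{real_inner,complete_space}" and \<sigma> \<pi> +
  fixes c :: "real^'d \<Rightarrow> 'u \<Rightarrow> real" and H :: nat
  assumes cnn: "\<forall>x u. 0 \<le> c x u"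
    and cm: "\<forall>h. (\<lambda>x. c x (\<pi> x h)) \<in> borel_measurable borel"
begin

lemma comp_meas[measurable]: "(\<lambda>w. w l) \<in> (pathS :: (nat \<Rightarrow> real^'d) measure) \<rightarrow>\<^sub>M borel"
  unfolding pathS_def by simp

lemma cost_meas[measurable]: "(\<lambda>x. c x (\<pi> x l)) \<in> borel_measurable borel"
  using cm by simp

lemma F_meas[measurable]: "(\<lambda>w. ennreal (\<Sum>l\<in>{h..<H}. c (w l) (\<pi> (w l) l))) \<in> borel_measurable (pathS :: (nat \<Rightarrow> real^'d) measure)"
  by measurable

lemma ctg_meas:
  assumes V: "bounded_linear V"
  shows "(\<lambda>x. ctg V \<phi> \<sigma> \<pi> H c h x) \<in> borel_measurable borel"
  using measurable_compose[OF measurable_prob_algebraD[OF traj_kernel[OF V, of "H-h" h]]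
      nn_integral_measurable_subprob_algebra[OF F_meas[of h]]]
  by (simp add: ctg_def)

lemma ctg_H[simp]: "ctg V \<phi> \<sigma> \<pi> H c H x = 0"
  by (simp add: ctg_def)

lemma ctg_Suc:
  assumes V: "bounded_linear V" and h: "h < H"
  shows "ctg V \<phi> \<sigma> \<pi> H c h x = ennreal (c x (\<pi> x h)) + (\<integral>\<^sup>+y. ctg V \<phi> \<sigma> \<pi> H c (Suc h) y \<partial>trans V \<phi> \<sigma> x (\<pi> x h))"
proof -
  have n: "H - h = Suc (H - Suc h)" using h by simp
  have eq: "ennreal (\<Sum>l\<in>{h..<H}. c ((w(h := x)) l) (\<pi> ((w(h := x)) l) l))
      = ennreal (c x (\<pi> x h)) + ennreal (\<Sum>l\<in>{Suc h..<H}. c (w l) (\<pi> (w l) l))" for w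
  proof -
    have "(\<Sum>l\<in>{h..<H}. c ((w(h := x)) l) (\<pi> ((w(h := x)) l) l))
       = c x (\<pi> x h) + (\<Sum>l\<in>{Suc h..<H}. c ((w(h := x)) l) (\<pi> ((w(h := x)) l) l))"
      using h by (subst sum.atLeast_Suc_lessThan) auto
    also have "(\<Sum>l\<in>{Suc h..<H}. c ((w(h := x)) l) (\<pi> ((w(h := x)) l) l)) = (\<Sum>l\<in>{Suc h..<H}. c (w l) (\<pi> (w l) l))"
      by (rule sum.cong) auto
    finally show ?thesis using cnn by (simp add: ennreal_plus sum_nonneg)
  qed
  have "ctg V \<phi> \<sigma> \<pi> H c h x = (\<integral>\<^sup>+y. (\<integral>\<^sup>+w. ennreal (c x (\<pi> x h)) + ennreal (\<Sum>l\<in>{Suc h..<H}. c (w l) (\<pi> (w l) l))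
      \<partial>traj V \<phi> \<sigma> \<pi> (H - Suc h) (Suc h) y) \<partial>trans V \<phi> \<sigma> x (\<pi> x h))"
    unfolding ctg_def n by (simp only: traj_Suc_nn[OF V F_meas] eq)
  also have "\<dots> = (\<integral>\<^sup>+y. ennreal (c x (\<pi> x h)) + ctg V \<phi> \<sigma> \<pi> H c (Suc h) y \<partial>trans V \<phi> \<sigma> x (\<pi> x h))"
    apply (rule nn_integral_cong)
    apply (subst prob_add[OF traj_prob[OF V]])
     apply (subst measurable_cong_sets[OF sets_traj[OF V] refl])
     apply measurable
    apply (simp add: ctg_def)
    done
  also have "\<dots> = ennreal (c x (\<pi> x h)) + (\<integral>\<^sup>+y. ctg V \<phi> \<sigma> \<pi> H c (Suc h) y \<partial>trans V \<phi> \<sigma> x (\<pi> x h))"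
    by (rule prob_add[OF trans_prob]) (simp add: measurable_cong_sets[OF sets_trans refl] ctg_meas[OF V])
  finally show ?thesis .
qed

end


declare traj.simps(2)[simp del]

locale S2 = S1 \<phi> \<sigma> \<pi> c H for \<phi> :: "real^'d \<Rightarrow> 'u \<Rightarrow> 'h::{real_inner,complete_space}" and \<sigma> \<pi> c H +
  fixes W Ws :: "'h \<Rightarrow> real^'d"
  assumes blW: "bounded_linear W" and blWs: "bounded_linear Ws"
begin

definition "Jm h x = ctg W \<phi> \<sigma> \<pi> H c h x"
definition "Js h x = ctg Ws \<phi> \<sigma> \<pi> H c h x"
definition "Jt h x = min (Jm h x) (Js h x)"
definition "aa l y = (\<integral>\<^sup>+x'. Jt (Suc l) x' \<partial>trans Ws \<phi> \<sigma> y (\<pi> y l))"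
definition "bb l y = (\<integral>\<^sup>+x'. Jt (Suc l) x' \<partial>trans W \<phi> \<sigma> y (\<pi> y l))"
definition "SS f h w = (\<Sum>l\<in>{h..<H}. (if \<forall>k\<in>{h..l}. Jm k (w k) < Js k (w k) then f l (w l) else (0::ennreal)))"

lemma Jm_meas[measurable]: "Jm h \<in> borel_measurable borel"
  using ctg_meas[OF blW] unfolding Jm_def by simp

lemma Js_meas[measurable]: "Js h \<in> borel_measurable borel"
  using ctg_meas[OF blWs] unfolding Js_def by simp

lemma Jt_meas[measurable]: "Jt h \<in> borel_measurable borel"
  unfolding Jt_def by measurable

lemma aa_meas[measurable]: "aa l \<in> borel_measurable borel"
  using measurable_compose[OF measurable_prob_algebraD[OF trans_kernel[OF blWs, of l]]
      nn_integral_measurable_subprob_algebra[OF Jt_meas[of "Suc l"]]]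
  unfolding aa_def by simp

lemma bb_meas[measurable]: "bb l \<in> borel_measurable borel"
  using measurable_compose[OF measurable_prob_algebraD[OF trans_kernel[OF blW, of l]]
      nn_integral_measurable_subprob_algebra[OF Jt_meas[of "Suc l"]]]
  unfolding bb_def by simp

lemma SS_meas:
  assumes [measurable]: "\<And>l. f l \<in> borel_measurable borel"
  shows "SS f h \<in> borel_measurable pathS"
  unfolding SS_def by measurable

lemma SS_H[simp]: "SS f H w = 0"
  by (simp add: SS_def)

lemma SS_upd:
  assumes h: "h < H"
  shows "SS f h (w(h := x)) = (if Jm h x < Js h x then f h x + SS f (Suc h) w else 0)"
proof -
  have "SS f h (w(h := x)) = (if Jm h x < Js h x then f h x else 0) +
     (\<Sum>l\<in>{Suc h..<H}. (if \<forall>k\<in>{h..l}. Jm k ((w(h := x)) k) < Js k ((w(h := x)) k) then f l ((w(h := x)) l) else 0))"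
    unfolding SS_def using h by (subst sum.atLeast_Suc_lessThan) auto
  also have "(\<Sum>l\<in>{Suc h..<H}. (if \<forall>k\<in>{h..l}. Jm k ((w(h := x)) k) < Js k ((w(h := x)) k) then f l ((w(h := x)) l) else 0))
     = (\<Sum>l\<in>{Suc h..<H}. (if Jm h x < Js h x then (if \<forall>k\<in>{Suc h..l}. Jm k (w k) < Js k (w k) then f l (w l) else 0) else 0))"
  proof (rule sum.cong[OF refl])
    fix l assume l: "l \<in> {Suc h..<H}"
    have "(\<forall>k\<in>{h..l}. Jm k ((w(h := x)) k) < Js k ((w(h := x)) k)) \<longleftrightarrow>
          Jm h x < Js h x \<and> (\<forall>k\<in>{Suc h..l}. Jm k (w k) < Js k (w k))"
    proof
      assume "\<forall>k\<in>{h..l}. Jm k ((w(h := x)) k) < Js k ((w(h := x)) k)"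
      then show "Jm h x < Js h x \<and> (\<forall>k\<in>{Suc h..l}. Jm k (w k) < Js k (w k))"
        using l by (metis (no_types, lifting) Suc_leD atLeastAtMost_iff atLeastLessThan_iff fun_upd_other fun_upd_same le_refl less_le n_not_Suc_n not_less_eq_eq)
    next
      assume "Jm h x < Js h x \<and> (\<forall>k\<in>{Suc h..l}. Jm k (w k) < Js k (w k))"
      then show "\<forall>k\<in>{h..l}. Jm k ((w(h := x)) k) < Js k ((w(h := x)) k)"
        by (metis atLeastAtMost_iff fun_upd_other fun_upd_same le_antisym not_less_eq_eq)
    qed
    moreover have "(w(h := x)) l = w l" using l by auto
    ultimately show "(if \<forall>k\<in>{h..l}. Jm k ((w(h := x)) k) < Js k ((w(h := x)) k) then f l ((w(h := x)) l) else 0)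
      = (if Jm h x < Js h x then (if \<forall>k\<in>{Suc h..l}. Jm k (w k) < Js k (w k) then f l (w l) else 0) else 0)"
      by simp
  qed
  finally have eq: "SS f h (w(h := x)) = (if Jm h x < Js h x then f h x else 0) +
     (\<Sum>l\<in>{Suc h..<H}. (if Jm h x < Js h x then (if \<forall>k\<in>{Suc h..l}. Jm k (w k) < Js k (w k) then f l (w l) else 0) else 0))" .
  show ?thesis unfolding eq
    by (cases "Jm h x < Js h x") (simp_all add: SS_def[of f "Suc h" w])
qed


lemma G_meas:
  assumes [measurable]: "\<And>l. f l \<in> borel_measurable borel"
  shows "(\<lambda>y. \<integral>\<^sup>+w. SS f h w \<partial>traj Ws \<phi> \<sigma> \<pi> n h y) \<in> borel_measurable borel"
  using measurable_compose[OF measurable_prob_algebraD[OF traj_kernel[OF blWs, where n=n and h=h]]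
      nn_integral_measurable_subprob_algebra[OF SS_meas[of f h]]] by simp

lemma G_meas_trans:
  assumes [measurable]: "\<And>l. f l \<in> borel_measurable borel"
  shows "(\<lambda>y. \<integral>\<^sup>+w. SS f h w \<partial>traj Ws \<phi> \<sigma> \<pi> n h y) \<in> borel_measurable (trans V \<phi> \<sigma> x u)"
  using G_meas[where f=f and h=h and n=n] assms by (simp add: measurable_cong_sets[OF sets_trans refl])

lemma unroll:
  assumes [measurable]: "\<And>l. f l \<in> borel_measurable borel" and h: "h < H"
  shows "(\<integral>\<^sup>+w. SS f h w \<partial>traj Ws \<phi> \<sigma> \<pi> (Suc n) h x) =
    (if Jm h x < Js h x then f h x + (\<integral>\<^sup>+y. (\<integral>\<^sup>+w. SS f (Suc h) w \<partial>traj Ws \<phi> \<sigma> \<pi> n (Suc h) y) \<partial>trans Ws \<phi> \<sigma> x (\<pi> x h)) else 0)"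
proof -
  have "(\<integral>\<^sup>+w. SS f h w \<partial>traj Ws \<phi> \<sigma> \<pi> (Suc n) h x) =
     (\<integral>\<^sup>+y. (\<integral>\<^sup>+w. (if Jm h x < Js h x then f h x + SS f (Suc h) w else 0) \<partial>traj Ws \<phi> \<sigma> \<pi> n (Suc h) y) \<partial>trans Ws \<phi> \<sigma> x (\<pi> x h))"
    by (simp only: traj_Suc_nn[OF blWs SS_meas[OF assms(1)]] SS_upd[OF h])
  also have "\<dots> = (if Jm h x < Js h x then f h x + (\<integral>\<^sup>+y. (\<integral>\<^sup>+w. SS f (Suc h) w \<partial>traj Ws \<phi> \<sigma> \<pi> n (Suc h) y) \<partial>trans Ws \<phi> \<sigma> x (\<pi> x h)) else 0)"
  proof (cases "Jm h x < Js h x")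
    case True
    have "(\<integral>\<^sup>+y. (\<integral>\<^sup>+w. f h x + SS f (Suc h) w \<partial>traj Ws \<phi> \<sigma> \<pi> n (Suc h) y) \<partial>trans Ws \<phi> \<sigma> x (\<pi> x h))
       = (\<integral>\<^sup>+y. f h x + (\<integral>\<^sup>+w. SS f (Suc h) w \<partial>traj Ws \<phi> \<sigma> \<pi> n (Suc h) y) \<partial>trans Ws \<phi> \<sigma> x (\<pi> x h))"
      apply (rule nn_integral_cong)
      apply (rule prob_add[OF traj_prob[OF blWs]])
      apply (subst measurable_cong_sets[OF sets_traj[OF blWs] refl])
      by (rule SS_meas[OF assms(1)])
    also have "\<dots> = f h x + (\<integral>\<^sup>+y. (\<integral>\<^sup>+w. SS f (Suc h) w \<partial>traj Ws \<phi> \<sigma> \<pi> n (Suc h) y) \<partial>trans Ws \<phi> \<sigma> x (\<pi> x h))"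
      by (rule prob_add[OF trans_prob G_meas_trans[OF assms(1)]])
    finally show ?thesis using True by simp
  qed simp
  finally show ?thesis .
qed

lemma Js_Suc: "h < H \<Longrightarrow> Js h x = ennreal (c x (\<pi> x h)) + (\<integral>\<^sup>+y. Js (Suc h) y \<partial>trans Ws \<phi> \<sigma> x (\<pi> x h))"
  unfolding Js_def by (rule ctg_Suc[OF blWs])

lemma Jm_Suc: "h < H \<Longrightarrow> Jm h x = ennreal (c x (\<pi> x h)) + (\<integral>\<^sup>+y. Jm (Suc h) y \<partial>trans W \<phi> \<sigma> x (\<pi> x h))"
  unfolding Jm_def by (rule ctg_Suc[OF blW])

lemma Js_H[simp]: "Js H x = 0" by (simp add: Js_def)
lemma Jm_H[simp]: "Jm H x = 0" by (simp add: Jm_def)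

lemma meas_trans: "f \<in> borel_measurable borel \<Longrightarrow> f \<in> borel_measurable (trans V \<phi> \<sigma> x u)"
  by (simp add: measurable_cong_sets[OF sets_trans refl])

lemma main_ineq:
  "h + n = H \<Longrightarrow> Js h x + (\<integral>\<^sup>+w. SS bb h w \<partial>traj Ws \<phi> \<sigma> \<pi> n h x) \<le> Jt h x + (\<integral>\<^sup>+w. SS aa h w \<partial>traj Ws \<phi> \<sigma> \<pi> n h x)"
proof (induction n arbitrary: h x)
  case 0
  then show ?case by (simp add: Jt_def)
next
  case (Suc n)
  then have h: "h < H" and hn: "Suc h + n = H" by auto
  let ?P = "trans Ws \<phi> \<sigma> x (\<pi> x h)"
  let ?Pw = "trans W \<phi> \<sigma> x (\<pi> x h)"
  define GA where "GA y = (\<integral>\<^sup>+w. SS aa (Suc h) w \<partial>traj Ws \<phi> \<sigma> \<pi> n (Suc h) y)" for y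
  define GB where "GB y = (\<integral>\<^sup>+w. SS bb (Suc h) w \<partial>traj Ws \<phi> \<sigma> \<pi> n (Suc h) y)" for y
  have GAm: "GA \<in> borel_measurable ?P" unfolding GA_def by (rule G_meas_trans) simp
  have GBm: "GB \<in> borel_measurable ?P" unfolding GB_def by (rule G_meas_trans) simp
  show ?case
  proof (cases "Jm h x < Js h x")
    case False
    then show ?thesis
      by (simp add: unroll[OF aa_meas h] unroll[OF bb_meas h] Jt_def)
  next
    case True
    let ?c = "ennreal (c x (\<pi> x h))"
    have "Js h x + (\<integral>\<^sup>+w. SS bb h w \<partial>traj Ws \<phi> \<sigma> \<pi> (Suc n) h x)
        = ?c + (\<integral>\<^sup>+y. Js (Suc h) y \<partial>?P) + (bb h x + (\<integral>\<^sup>+y. GB y \<partial>?P))"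
      using True by (simp add: unroll[OF aa_meas h] unroll[OF bb_meas h] Js_Suc[OF h] GB_def)
    also have "\<dots> = ?c + bb h x + (\<integral>\<^sup>+y. Js (Suc h) y + GB y \<partial>?P)"
      by (simp add: nn_integral_add meas_trans GBm ac_simps)
    also have "\<dots> \<le> ?c + bb h x + (\<integral>\<^sup>+y. Jt (Suc h) y + GA y \<partial>?P)"
      using Suc.IH[OF hn] by (intro add_left_mono nn_integral_mono) (simp add: GA_def GB_def)
    also have "\<dots> = ?c + bb h x + (aa h x + (\<integral>\<^sup>+y. GA y \<partial>?P))"
      by (simp add: nn_integral_add meas_trans GAm aa_def)
    also have "\<dots> \<le> ?c + (\<integral>\<^sup>+y. Jm (Suc h) y \<partial>?Pw) + (aa h x + (\<integral>\<^sup>+y. GA y \<partial>?P))"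
      unfolding bb_def Jt_def by (intro add_right_mono add_left_mono nn_integral_mono) simp
    also have "\<dots> = Jt h x + (\<integral>\<^sup>+w. SS aa h w \<partial>traj Ws \<phi> \<sigma> \<pi> (Suc n) h x)"
      using True by (simp add: unroll[OF aa_meas h] unroll[OF bb_meas h] Jm_Suc[OF h] GA_def Jt_def)
    finally show ?thesis .
  qed
qed

lemma A_bound:
  "h + n = H \<Longrightarrow> (\<integral>\<^sup>+w. SS aa h w \<partial>traj Ws \<phi> \<sigma> \<pi> n h x) \<le> of_nat n * Js h x"
proof (induction n arbitrary: h x)
  case 0
  then show ?case by simp
next
  case (Suc n)
  then have h: "h < H" and hn: "Suc h + n = H" by auto
  let ?P = "trans Ws \<phi> \<sigma> x (\<pi> x h)"
  define GA where "GA y = (\<integral>\<^sup>+w. SS aa (Suc h) w \<partial>traj Ws \<phi> \<sigma> \<pi> n (Suc h) y)" for y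
  have a: "aa h x \<le> (\<integral>\<^sup>+y. Js (Suc h) y \<partial>?P)"
    unfolding aa_def Jt_def by (intro nn_integral_mono) simp
  have js: "(\<integral>\<^sup>+y. Js (Suc h) y \<partial>?P) \<le> Js h x"
    unfolding Js_Suc[OF h, of x] by (simp add: add_increasing)
  have "(\<integral>\<^sup>+w. SS aa h w \<partial>traj Ws \<phi> \<sigma> \<pi> (Suc n) h x) \<le> aa h x + (\<integral>\<^sup>+y. GA y \<partial>?P)"
    by (simp add: unroll[OF aa_meas h] unroll[OF bb_meas h] GA_def)
  also have "\<dots> \<le> Js h x + (\<integral>\<^sup>+y. of_nat n * Js (Suc h) y \<partial>?P)"
    using Suc.IH[OF hn] a js by (intro add_mono nn_integral_mono) (auto simp: GA_def)
  also have "\<dots> = Js h x + of_nat n * (\<integral>\<^sup>+y. Js (Suc h) y \<partial>?P)"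
    by (simp add: nn_integral_cmult meas_trans)
  also have "\<dots> \<le> Js h x + of_nat n * Js h x"
    using js by (intro add_left_mono mult_left_mono) auto
  also have "\<dots> = of_nat (Suc n) * Js h x"
    by (simp add: distrib_right)
  finally show ?case .
qed

end


lemma sum_enn2real_eq:
  assumes "finite A" "(\<Sum>l\<in>A. g l) \<noteq> (\<top>::ennreal)"
  shows "ennreal (\<Sum>l\<in>A. enn2real (g l)) = (\<Sum>l\<in>A. g l)"
proof -
  have "g l < \<top>" if "l \<in> A" for l using assms that by (simp add: less_top)
  then have "(\<Sum>l\<in>A. ennreal (enn2real (g l))) = (\<Sum>l\<in>A. g l)"
    by (intro sum.cong) auto
  moreover have "(\<Sum>l\<in>A. ennreal (enn2real (g l))) = ennreal (\<Sum>l\<in>A. enn2real (g l))"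
    by (rule sum_ennreal) simp
  ultimately show ?thesis by simp
qed

lemma less_Least_iff:
  fixes P :: "nat \<Rightarrow> bool"
  assumes "P m"
  shows "h < (LEAST k. P k) \<longleftrightarrow> (\<forall>k\<in>{0..h}. \<not> P k)"
proof
  assume hl: "h < (LEAST k. P k)"
  show "\<forall>k\<in>{0..h}. \<not> P k"
  proof
    fix k assume "k \<in> {0..h}"
    then have "k < (LEAST k. P k)" using hl by simp
    then show "\<not> P k" by (rule not_less_Least)
  qed
next
  assume a: "\<forall>k\<in>{0..h}. \<not> P k"
  show "h < (LEAST k. P k)"
  proof (rule ccontr)
    assume "\<not> h < (LEAST k. P k)"
    then have "(LEAST k. P k) \<in> {0..h}" by simp
    moreover have "P (LEAST k. P k)" using assms by (rule LeastI)
    ultimately show False using a by blast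
  qed
qed

lemma sq_bound: "(s::real) \<le> 1 + s^2"
proof (cases "s \<le> 1")
  case True then show ?thesis by (smt (verit) zero_le_power2)
next
  case False then have "s * 1 \<le> s * s" by (intro mult_left_mono) auto
  then show ?thesis by (simp add: power2_eq_square)
qed

lemma sq_bound_enn: "ennreal (s::real) \<le> 1 + ennreal (s^2)"
proof -
  have "ennreal s \<le> ennreal (1 + s^2)" by (rule ennreal_leI[OF sq_bound])
  also have "\<dots> = 1 + ennreal (s^2)" by (simp add: ennreal_plus)
  finally show ?thesis .
qed

theorem mainTheorem4:
  fixes \<phi> :: "real^'d \<Rightarrow> 'u \<Rightarrow> 'h::{real_inner,complete_space}"
    and W Wstar :: "'h \<Rightarrow> real^'d" and \<sigma> :: real and H :: nat
    and \<pi> :: "real^'d \<Rightarrow> nat \<Rightarrow> 'u" and c :: "real^'d \<Rightarrow> 'u \<Rightarrow> real" and x0 :: "real^'d"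
  assumes "\<sigma> > 0" and "bounded_linear W" and "bounded_linear Wstar"
    and "\<forall>x u. 0 \<le> c x u"
    and "\<forall>h. (\<lambda>x. c x (\<pi> x h)) \<in> borel_measurable borel"
    and "\<forall>h. (\<lambda>x. \<phi> x (\<pi> x h)) \<in> borel_measurable borel"
    and "\<forall>h x. ctg W \<phi> \<sigma> \<pi> H c h x < \<infinity>"
    and "(\<integral>\<^sup>+ \<omega>. ennreal ((\<Sum>h<H. c (\<omega> h) (\<pi> (\<omega> h) h))^2) \<partial>traj Wstar \<phi> \<sigma> \<pi> H 0 x0) < \<infinity>"
  shows
    "let J = ctg W \<phi> \<sigma> \<pi> H c;
         Js = ctg Wstar \<phi> \<sigma> \<pi> H c;
         \<tau> = (\<lambda>\<omega>::nat \<Rightarrow> real^'d. LEAST h. J h (\<omega> h) \<ge> Js h (\<omega> h));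
         Jt = (\<lambda>h x. enn2real (min (J h x) (Js h x)))
     in enn2real (Js 0 x0) - enn2real (J 0 x0)
        \<le> (\<integral>\<omega>. (\<Sum>h<H. (if h < \<tau> \<omega> then 1 else 0) *
               ((\<integral>x'. Jt (Suc h) x' \<partial>trans Wstar \<phi> \<sigma> (\<omega> h) (\<pi> (\<omega> h) h))
                - (\<integral>x'. Jt (Suc h) x' \<partial>trans W \<phi> \<sigma> (\<omega> h) (\<pi> (\<omega> h) h))))
           \<partial>traj Wstar \<phi> \<sigma> \<pi> H 0 x0)"
proof -
  interpret S2 \<phi> \<sigma> \<pi> c H W Wstar
    by (intro S2.intro S1.intro S.intro S2_axioms.intro S1_axioms.intro) (use assms in auto)
  let ?tr = "traj Wstar \<phi> \<sigma> \<pi> H 0 x0"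
  have trp: "prob_space ?tr" by (rule traj_prob[OF blWs])
  have sets_tr: "sets ?tr = sets pathS" by (rule sets_traj[OF blWs])
  define tA where "tA l w = (if \<forall>k\<in>{0..l}. Jm k (w k) < Js k (w k) then aa l (w l) else 0)" for l w
  define tB where "tB l w = (if \<forall>k\<in>{0..l}. Jm k (w k) < Js k (w k) then bb l (w l) else 0)" for l w
  define fA where "fA w = (\<Sum>l<H. enn2real (tA l w))" for w
  define fB where "fB w = (\<Sum>l<H. enn2real (tB l w))" for w
  have SSA: "SS aa 0 w = (\<Sum>l<H. tA l w)" for w
    by (simp add: SS_def tA_def atLeast0LessThan)
  have SSB: "SS bb 0 w = (\<Sum>l<H. tB l w)" for w
    by (simp add: SS_def tB_def atLeast0LessThan)
  have fAm: "fA \<in> borel_measurable ?tr"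
    unfolding measurable_cong_sets[OF sets_tr refl] fA_def tA_def by measurable
  have fBm: "fB \<in> borel_measurable ?tr"
    unfolding measurable_cong_sets[OF sets_tr refl] fB_def tB_def by measurable
  have SSAm: "SS aa 0 \<in> borel_measurable ?tr"
    unfolding measurable_cong_sets[OF sets_tr refl] by (rule SS_meas) simp
  have SSBm: "SS bb 0 \<in> borel_measurable ?tr"
    unfolding measurable_cong_sets[OF sets_tr refl] by (rule SS_meas) simp

  have Jm0: "Jm 0 x0 < \<infinity>" using assms(7) by (simp add: Jm_def)
  define S where "S w = (\<Sum>h<H. c (w h) (\<pi> (w h) h))" for w :: "nat \<Rightarrow> real^'d"
  have Sm: "(\<lambda>w. ennreal ((S w)^2)) \<in> borel_measurable ?tr"
    unfolding measurable_cong_sets[OF sets_tr refl] S_def by measurable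
  have "Js 0 x0 = (\<integral>\<^sup>+w. ennreal (S w) \<partial>?tr)"
    by (simp add: Js_def ctg_def S_def atLeast0LessThan)
  also have "\<dots> \<le> (\<integral>\<^sup>+w. 1 + ennreal ((S w)^2) \<partial>?tr)"
    by (intro nn_integral_mono) (rule sq_bound_enn)
  also have "\<dots> = 1 + (\<integral>\<^sup>+w. ennreal ((S w)^2) \<partial>?tr)"
    by (rule prob_add[OF trp Sm])
  also have "\<dots> < \<infinity>" using assms(8) by (simp add: S_def)
  finally have Js0: "Js 0 x0 < \<infinity>" .

  have ineq: "Js 0 x0 + (\<integral>\<^sup>+w. SS bb 0 w \<partial>?tr) \<le> Jt 0 x0 + (\<integral>\<^sup>+w. SS aa 0 w \<partial>?tr)"
    using main_ineq[of 0 H x0] by simp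
  have IA: "(\<integral>\<^sup>+w. SS aa 0 w \<partial>?tr) < \<infinity>"
  proof -
    have "(\<integral>\<^sup>+w. SS aa 0 w \<partial>?tr) \<le> of_nat H * Js 0 x0"
      using A_bound[of 0 H x0] by simp
    also have "\<dots> < \<infinity>" using Js0 by (simp add: ennreal_mult_less_top of_nat_less_top)
    finally show ?thesis .
  qed
  have Jt0: "Jt 0 x0 \<le> Jm 0 x0" by (simp add: Jt_def)
  have ineq2: "Js 0 x0 + (\<integral>\<^sup>+w. SS bb 0 w \<partial>?tr) \<le> Jm 0 x0 + (\<integral>\<^sup>+w. SS aa 0 w \<partial>?tr)"
    using ineq Jt0 by (meson add_right_mono order_trans)
  have IB: "(\<integral>\<^sup>+w. SS bb 0 w \<partial>?tr) < \<infinity>"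
  proof -
    have "(\<integral>\<^sup>+w. SS bb 0 w \<partial>?tr) \<le> Js 0 x0 + (\<integral>\<^sup>+w. SS bb 0 w \<partial>?tr)" by simp
    also have "\<dots> \<le> Jm 0 x0 + (\<integral>\<^sup>+w. SS aa 0 w \<partial>?tr)" by (rule ineq2)
    also have "\<dots> < \<infinity>" using Jm0 IA by (simp add: ennreal_add_less_top)
    finally show ?thesis .
  qed

  have AEA: "AE w in ?tr. ennreal (fA w) = SS aa 0 w"
  proof -
    have "AE w in ?tr. SS aa 0 w \<noteq> \<infinity>"
      using nn_integral_noteq_infinite[OF SSAm] IA by simp
    then show ?thesis
      by eventually_elim (simp add: fA_def SSA sum_enn2real_eq)
  qed
  have AEB: "AE w in ?tr. ennreal (fB w) = SS bb 0 w"
  proof -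
    have "AE w in ?tr. SS bb 0 w \<noteq> \<infinity>"
      using nn_integral_noteq_infinite[OF SSBm] IB by simp
    then show ?thesis
      by eventually_elim (simp add: fB_def SSB sum_enn2real_eq)
  qed
  have fA_nn: "0 \<le> fA w" for w by (simp add: fA_def sum_nonneg)
  have fB_nn: "0 \<le> fB w" for w by (simp add: fB_def sum_nonneg)
  have nnA: "(\<integral>\<^sup>+w. ennreal (fA w) \<partial>?tr) = (\<integral>\<^sup>+w. SS aa 0 w \<partial>?tr)"
    by (rule nn_integral_cong_AE[OF AEA])
  have nnB: "(\<integral>\<^sup>+w. ennreal (fB w) \<partial>?tr) = (\<integral>\<^sup>+w. SS bb 0 w \<partial>?tr)"
    by (rule nn_integral_cong_AE[OF AEB])
  have intA: "integrable ?tr fA"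
    by (rule integrableI_nonneg[OF fAm]) (use fA_nn nnA IA in auto)
  have intB: "integrable ?tr fB"
    by (rule integrableI_nonneg[OF fBm]) (use fB_nn nnB IB in auto)
  have eqA: "(\<integral>w. fA w \<partial>?tr) = enn2real (\<integral>\<^sup>+w. SS aa 0 w \<partial>?tr)"
    using integral_eq_nn_integral[OF fAm] fA_nn nnA by simp
  have eqB: "(\<integral>w. fB w \<partial>?tr) = enn2real (\<integral>\<^sup>+w. SS bb 0 w \<partial>?tr)"
    using integral_eq_nn_integral[OF fBm] fB_nn nnB by simp

  have real_ineq: "enn2real (Js 0 x0) - enn2real (Jm 0 x0)
      \<le> enn2real (\<integral>\<^sup>+w. SS aa 0 w \<partial>?tr) - enn2real (\<integral>\<^sup>+w. SS bb 0 w \<partial>?tr)"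
  proof -
    have "enn2real (Js 0 x0 + (\<integral>\<^sup>+w. SS bb 0 w \<partial>?tr)) \<le> enn2real (Jm 0 x0 + (\<integral>\<^sup>+w. SS aa 0 w \<partial>?tr))"
      using ineq2 Jm0 IA by (intro enn2real_mono) (auto simp: ennreal_add_less_top)
    then show ?thesis using Js0 Jm0 IA IB by (simp add: enn2real_plus)
  qed

  have inner: "(\<integral>x'. enn2real (min (ctg W \<phi> \<sigma> \<pi> H c (Suc h) x') (ctg Wstar \<phi> \<sigma> \<pi> H c (Suc h) x')) \<partial>trans V \<phi> \<sigma> y u)
      = enn2real (\<integral>\<^sup>+x'. Jt (Suc h) x' \<partial>trans V \<phi> \<sigma> y u)" for V h y u
  proof -
    have fin: "Jt (Suc h) x' < \<top>" for x'
      using assms(7)[rule_format, of "Suc h" x'] by (simp add: Jt_def Jm_def min.strict_coboundedI1)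
    have m: "(\<lambda>x'. enn2real (Jt (Suc h) x')) \<in> borel_measurable (trans V \<phi> \<sigma> y u)"
      by (rule meas_trans) measurable
    have "(\<integral>x'. enn2real (Jt (Suc h) x') \<partial>trans V \<phi> \<sigma> y u) = enn2real (\<integral>\<^sup>+x'. Jt (Suc h) x' \<partial>trans V \<phi> \<sigma> y u)"
      using integral_eq_nn_integral[OF m] fin by simp
    then show ?thesis by (simp add: Jt_def Jm_def Js_def)
  qed
  have tau: "h < (LEAST k. ctg Wstar \<phi> \<sigma> \<pi> H c k (w k) \<le> ctg W \<phi> \<sigma> \<pi> H c k (w k))
      \<longleftrightarrow> (\<forall>k\<in>{0..h}. Jm k (w k) < Js k (w k))" for h w
    by (subst less_Least_iff[where m=H]) (auto simp: Jm_def Js_def not_le)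
  have integrand: "(\<Sum>h<H. (if h < (LEAST k. ctg Wstar \<phi> \<sigma> \<pi> H c k (w k) \<le> ctg W \<phi> \<sigma> \<pi> H c k (w k)) then 1 else 0) *
               ((\<integral>x'. enn2real (min (ctg W \<phi> \<sigma> \<pi> H c (Suc h) x') (ctg Wstar \<phi> \<sigma> \<pi> H c (Suc h) x')) \<partial>trans Wstar \<phi> \<sigma> (w h) (\<pi> (w h) h))
                - (\<integral>x'. enn2real (min (ctg W \<phi> \<sigma> \<pi> H c (Suc h) x') (ctg Wstar \<phi> \<sigma> \<pi> H c (Suc h) x')) \<partial>trans W \<phi> \<sigma> (w h) (\<pi> (w h) h))))
       = fA w - fB w" for w
    unfolding fA_def fB_def sum_subtractf[symmetric]
    by (rule sum.cong[OF refl]) (simp add: inner tau tA_def tB_def aa_def bb_def)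
  show ?thesis
    unfolding Let_def integrand
    using real_ineq eqA eqB Bochner_Integration.integral_diff[OF intA intB]
    by (simp add: Jm_def Js_def)
qed

end
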